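(* Let $\mu$ be an isotropic log-concave probability measure on $\mathbb{R}$ (i.e. with mean $0$ and variance $1$). Then $\Gamma(\mu)\leq 2$. Moreover, the bound is sharp: if $\mu$ is the law of $Y-1$ where $Y$ is exponentially distributed with parameter $1$ (density $e^{-(x+1)}\mathbf{1}_{\{x\geq -1\}}$), then $\mu$ is isotropic log-concave and $\Gamma(\mu)=2$.
   Context: A probability measure on $\mathbb{R}$ is log-concave if it has a density $f$ with $\ln f$ concave. For an interval $I=[a,b]$, $\mu^+(\partial I)=\liminf_{\epsilon\to0^+}\frac{\mu([a-\epsilon,b+\epsilon])-\mu([a,b])}{\epsilon}$, and $\Gamma(\mu)=\sup\{\mu^+(\partial I): I=[a,b]\subset\mathbb{R},\ a<b\}$. *)

theory Defs
  imports "HOL-Probability.Probability"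
begin

definition logconcave_fun :: "(real \<Rightarrow> real) \<Rightarrow> bool" where
  "logconcave_fun f \<longleftrightarrow> (\<forall>x. 0 \<le> f x) \<and>
     (\<forall>x y t. 0 \<le> t \<and> t \<le> 1 \<longrightarrow>
        f x powr (1 - t) * f y powr t \<le> f ((1 - t) * x + t * y))"

definition logconcave_measure :: "real measure \<Rightarrow> bool" where
  "logconcave_measure \<mu> \<longleftrightarrow> prob_space \<mu> \<and>
     (\<exists>f. f \<in> borel_measurable borel \<and> logconcave_fun f \<and>
          \<mu> = density lborel (\<lambda>x. ennreal (f x)))"

definition isotropic :: "real measure \<Rightarrow> bool" where
  "isotropic \<mu> \<longleftrightarrow> integrable \<mu> (\<lambda>x. x\<^sup>2) \<and>
     (\<integral>x. x \<partial>\<mu>) = 0 \<and> (\<integral>x. x\<^sup>2 \<partial>\<mu>) = 1"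

definition boundary_measure :: "real measure \<Rightarrow> real \<Rightarrow> real \<Rightarrow> ereal" where
  "boundary_measure \<mu> a b =
     Liminf (at_right 0)
       (\<lambda>\<epsilon>. ereal ((measure \<mu> {a - \<epsilon>..b + \<epsilon>} - measure \<mu> {a..b}) / \<epsilon>))"

definition Gamma_iso :: "real measure \<Rightarrow> ereal" where
  "Gamma_iso \<mu> = (SUP ab \<in> {(a, b). a < b}. boundary_measure \<mu> (fst ab) (snd ab))"

end

theory Submission
  imports Defs
begin


lemma erl_mom:
  assumes "0 < (l::real)"
  shows "has_bochner_integral lborel (\<lambda>x. erlang_density 0 l x * x^i) (fact i / l^i)"
proof (rule has_bochner_integral_nn_integral)
  show "AE x in lborel. 0 \<le> erlang_density 0 l x * x ^ i"
    using assms by (auto simp: erlang_density_def)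
  show "0 \<le> fact i / l ^ i" using assms by simp
  show "(\<integral>\<^sup>+ x. ennreal (erlang_density 0 l x * x ^ i) \<partial>lborel) = ennreal (fact i / l ^ i)"
    using nn_integral_erlang_ith_moment[OF assms, of 0 i] by simp
qed simp

lemma erl_poly:
  assumes "0 < (l::real)"
  shows "has_bochner_integral lborel (\<lambda>x. erlang_density 0 l x * (cu + cv*x + cw*x^2))
           (cu + cv/l + 2*cw/l^2)"
proof -
  have "has_bochner_integral lborel (\<lambda>x. cu * (erlang_density 0 l x * x^0) + cv * (erlang_density 0 l x * x^1)
          + cw * (erlang_density 0 l x * x^2)) (cu * (fact 0 / l^0) + cv * (fact 1 / l^1) + cw * (fact 2 / l^2))"
    by (intro has_bochner_integral_add has_bochner_integral_mult_right erl_mom assms)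
  then show ?thesis
    by (simp add: algebra_simps fact_numeral)
qed

lemma erl_shift:
  assumes "0 < (l::real)"
  shows "has_bochner_integral lborel (\<lambda>x. erlang_density 0 l (x - a) * (cu + cv*x + cw*x^2))
           (cu + cv*(a + 1/l) + cw*(a^2 + 2*a/l + 2/l^2))"
proof -
  let ?h = "\<lambda>x. erlang_density 0 l (x - a) * (cu + cv*x + cw*x^2)"
  have e: "?h (a + 1 * x) = erlang_density 0 l x * ((cu + cv*a + cw*a^2) + (cv + 2*cw*a)*x + cw*x^2)" for x
    by (simp add: algebra_simps power2_eq_square)
  have hb: "has_bochner_integral lborel (\<lambda>x. ?h (a + 1 * x)) ((cu + cv*a + cw*a^2) + (cv + 2*cw*a)/l + 2*cw/l^2)"
    unfolding e by (rule erl_poly[OF assms])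
  have int: "integrable lborel ?h"
    using hb lborel_integrable_real_affine_iff[of 1 ?h a] by (simp add: has_bochner_integral_iff)
  have "integral\<^sup>L lborel ?h = integral\<^sup>L lborel (\<lambda>x. ?h (a + 1 * x))"
    using lborel_integral_real_affine[of 1 ?h a] by simp
  also have "\<dots> = (cu + cv*a + cw*a^2) + (cv + 2*cw*a)/l + 2*cw/l^2"
    using hb by (simp add: has_bochner_integral_iff)
  finally show ?thesis using int
    by (simp add: has_bochner_integral_iff algebra_simps add_divide_distrib)
qed

lemma erl_refl:
  assumes "0 < (l::real)"
  shows "has_bochner_integral lborel (\<lambda>x. erlang_density 0 l (a - x) * (cu + cv*x + cw*x^2))
           (cu + cv*(a - 1/l) + cw*(a^2 - 2*a/l + 2/l^2))"
proof -
  let ?h = "\<lambda>x. erlang_density 0 l (a - x) * (cu + cv*x + cw*x^2)"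
  have e: "?h (a + (-1) * x) = erlang_density 0 l x * ((cu + cv*a + cw*a^2) + (-cv - 2*cw*a)*x + cw*x^2)" for x
    by (simp add: algebra_simps power2_eq_square)
  have hb: "has_bochner_integral lborel (\<lambda>x. ?h (a + (-1) * x)) ((cu + cv*a + cw*a^2) + (-cv - 2*cw*a)/l + 2*cw/l^2)"
    unfolding e by (rule erl_poly[OF assms])
  have int: "integrable lborel ?h"
    using hb lborel_integrable_real_affine_iff[of "-1" ?h a] by (simp add: has_bochner_integral_iff)
  have "integral\<^sup>L lborel ?h = integral\<^sup>L lborel (\<lambda>x. ?h (a + (-1) * x))"
    using lborel_integral_real_affine[of "-1" ?h a] by simp
  also have "\<dots> = (cu + cv*a + cw*a^2) + (-cv - 2*cw*a)/l + 2*cw/l^2"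
    using hb by (simp add: has_bochner_integral_iff)
  finally show ?thesis using int
    by (simp add: has_bochner_integral_iff algebra_simps add_divide_distrib diff_divide_distrib)
qed




lemma conv_step:
  assumes lc: "logconcave_fun f" and g0: "\<And>x. 0 \<le> g x"
   and G: "\<And>z t. 0 < t \<Longrightarrow> t \<le> 1 \<Longrightarrow> g ((1-t)*x0 + t*z) \<le> g x0 powr (1-t) * g z powr t"
   and x0: "g x0 < f x0" and z: "g z < f z" and t: "0 < t" "t \<le> 1"
  shows "g ((1-t)*x0 + t*z) < f ((1-t)*x0 + t*z)"
proof -
  have f0: "\<And>x. 0 \<le> f x" using lc unfolding logconcave_fun_def by blast
  have lcf: "f x0 powr (1 - t) * f z powr t \<le> f ((1 - t) * x0 + t * z)"
    using lc t unfolding logconcave_fun_def by auto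
  have A: "g x0 powr (1-t) \<le> f x0 powr (1-t)"
    by (rule powr_mono2) (use t x0 g0 in auto)
  have B: "g z powr t < f z powr t"
    by (rule powr_less_mono2) (use t z g0 in auto)
  have Bp: "0 < f x0 powr (1-t)" using x0 g0[of x0] by simp
  have "g x0 powr (1-t) * g z powr t \<le> f x0 powr (1-t) * g z powr t"
    by (rule mult_right_mono[OF A]) simp
  also have "\<dots> < f x0 powr (1-t) * f z powr t"
    by (rule mult_strict_left_mono[OF B Bp])
  finally show ?thesis using G[of t z, OF t] lcf by linarith
qed

lemma conv_set:
  assumes lc: "logconcave_fun f" and g0: "\<And>x. 0 \<le> g x"
   and G: "\<And>z t. 0 < t \<Longrightarrow> t \<le> 1 \<Longrightarrow> g ((1-t)*x0 + t*z) \<le> g x0 powr (1-t) * g z powr t"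
   and x0: "g x0 < f x0"
  shows "g y < f y \<Longrightarrow> g z < f z \<Longrightarrow> y \<le> x \<Longrightarrow> x \<le> z \<Longrightarrow> g x < f x"
proof -
  assume y: "g y < f y" and z: "g z < f z" and yx: "y \<le> x" and xz: "x \<le> z"
  consider "x = x0" | "x0 < x" | "x < x0" by linarith
  then show "g x < f x"
  proof cases
    case 1 then show ?thesis using x0 by simp
  next
    case 2
    define t where "t = (x - x0) / (z - x0)"
    have t: "0 < t" "t \<le> 1" using 2 xz unfolding t_def by (auto simp: field_simps)
    have h: "t * (z - x0) = x - x0" using 2 xz unfolding t_def by auto
    have "x = (1-t)*x0 + t*z" using h by (simp add: algebra_simps)
    then show ?thesis using conv_step[OF lc g0 G x0 z t] by simp
  next
    case 3
    define t where "t = (x0 - x) / (x0 - y)"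
    have t: "0 < t" "t \<le> 1" using 3 yx unfolding t_def by (auto simp: field_simps)
    have h: "t * (x0 - y) = x0 - x" using 3 yx unfolding t_def by auto
    have "x = (1-t)*x0 + t*y" using h by (simp add: algebra_simps)
    then show ?thesis using conv_step[OF lc g0 G x0 y t] by simp
  qed
qed

lemma powr_lin: "0 < (c::real) \<Longrightarrow> c * exp (t*u) = c powr (1-t) * (c * exp u) powr t"
proof -
  assume c: "0 < c"
  have "c powr (1-t) * (c * exp u) powr t = (c powr (1-t) * c powr t) * exp (u*t)"
    using c by (simp add: powr_mult exp_powr_real)
  also have "c powr (1-t) * c powr t = c"
    using c by (simp add: powr_add[symmetric])
  finally show ?thesis by (simp add: mult.commute)
qed

lemma G_two:
  fixes x0 l1 l2 z t :: real
  assumes c: "0 < (c::real)" and t: "0 < t" "t \<le> 1"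
  defines "g \<equiv> (\<lambda>x. if x0 \<le> x then c * exp (-l1*(x-x0)) else c*exp (l2*(x-x0)))"
  shows "g ((1-t)*x0 + t*z) \<le> g x0 powr (1-t) * g z powr t"
proof (cases "x0 \<le> z")
  case True
  have e: "(1-t)*x0 + t*z = x0 + t*(z-x0)" by (simp add: algebra_simps)
  have "x0 \<le> (1-t)*x0 + t*z" unfolding e using True t by simp
  then have "g ((1-t)*x0 + t*z) = c * exp (t * (-l1*(z-x0)))"
    unfolding g_def by (simp add: algebra_simps)
  also have "\<dots> = g x0 powr (1-t) * g z powr t"
    using True powr_lin[OF c, of t "-l1*(z-x0)"] unfolding g_def by simp
  finally show ?thesis by simp
next
  case False
  have e: "(1-t)*x0 + t*z = x0 + t*(z-x0)" by (simp add: algebra_simps)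
  have "t*(z-x0) < 0" using False t by (simp add: mult_pos_neg)
  then have "\<not> x0 \<le> (1-t)*x0 + t*z" unfolding e by simp
  then have "g ((1-t)*x0 + t*z) = c * exp (t * (l2*(z-x0)))"
    unfolding g_def by (simp add: algebra_simps)
  also have "\<dots> = g x0 powr (1-t) * g z powr t"
    using False powr_lin[OF c, of t "l2*(z-x0)"] unfolding g_def by simp
  finally show ?thesis by simp
qed

lemma G_one:
  fixes x0 l1 z t :: real
  assumes c: "0 < (c::real)" and t: "0 < t" "t \<le> 1"
  defines "g \<equiv> (\<lambda>x. if x0 \<le> x then c * exp (-l1*(x-x0)) else 0)"
  shows "g ((1-t)*x0 + t*z) \<le> g x0 powr (1-t) * g z powr t"
proof (cases "x0 \<le> z")
  case True
  have e: "(1-t)*x0 + t*z = x0 + t*(z-x0)" by (simp add: algebra_simps)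
  have "x0 \<le> (1-t)*x0 + t*z" unfolding e using True t by simp
  then have "g ((1-t)*x0 + t*z) = c * exp (t * (-l1*(z-x0)))"
    unfolding g_def by (simp add: algebra_simps)
  also have "\<dots> = g x0 powr (1-t) * g z powr t"
    using True powr_lin[OF c, of t "-l1*(z-x0)"] unfolding g_def by simp
  finally show ?thesis by simp
next
  case False
  have e: "(1-t)*x0 + t*z = x0 + t*(z-x0)" by (simp add: algebra_simps)
  have "t*(z-x0) < 0" using False t by (simp add: mult_pos_neg)
  then have "\<not> x0 \<le> (1-t)*x0 + t*z" unfolding e by simp
  then show ?thesis unfolding g_def by simp
qed




lemma ae_fin:
  fixes D k :: "real \<Rightarrow> real"
  assumes h: "has_bochner_integral lborel (\<lambda>x. (a*x + b) * D x) 0"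
    and nn: "\<And>x. 0 \<le> (a*x + b) * D x" and ab: "a \<noteq> 0 \<or> b \<noteq> 0"
    and hk: "has_bochner_integral lborel (\<lambda>x. k x * D x) I"
  shows "I = 0"
proof -
  have "AE x in lborel. (a*x + b) * D x = 0"
    using integral_nonneg_eq_0_iff_AE[of lborel "\<lambda>x. (a*x + b) * D x"] h nn
    by (simp add: has_bochner_integral_iff)
  moreover have "AE x in lborel. a*x + b \<noteq> 0"
  proof (cases "a = 0")
    case True then show ?thesis using ab by simp
  next
    case False
    show ?thesis using AE_lborel_singleton[of "-b/a"]
      by eventually_elim (use False in \<open>auto simp: field_simps\<close>)
  qed
  ultimately have "AE x in lborel. k x * D x = 0"
    by eventually_elim auto
  then have "integral\<^sup>L lborel (\<lambda>x. k x * D x) = 0" by (rule integral_eq_zero_AE)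
  then show ?thesis using hk by (simp add: has_bochner_integral_iff)
qed

lemma cross2:
  fixes f g :: "real \<Rightarrow> real"
  assumes conv: "\<And>y z x. g y < f y \<Longrightarrow> g z < f z \<Longrightarrow> y \<le> x \<Longrightarrow> x \<le> z \<Longrightarrow> g x < f x"
   and x0: "g x0 < f x0"
   and i0: "has_bochner_integral lborel (\<lambda>x. f x - g x) 0"
   and i1: "has_bochner_integral lborel (\<lambda>x. x * (f x - g x)) 0"
   and i2: "has_bochner_integral lborel (\<lambda>x. x^2 * (f x - g x)) I"
  shows "I \<le> 0"
proof -
  define S where "S = {x. g x < f x}"
  define D where "D = (\<lambda>x. f x - g x)"
  have x0S: "x0 \<in> S" using x0 S_def by simp
  have comb: "has_bochner_integral lborel (\<lambda>x. (a*x + b) * D x) 0" for a b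
  proof -
    have "has_bochner_integral lborel (\<lambda>x. a * (x * D x) + b * D x) (a * 0 + b * 0)"
      using i0 i1 unfolding D_def by (intro has_bochner_integral_add has_bochner_integral_mult_right)
    then show ?thesis by (simp add: algebra_simps)
  qed
  have i2': "has_bochner_integral lborel (\<lambda>x. x^2 * D x) I" using i2 D_def by simp
  show ?thesis
  proof (cases "bdd_above S")
    case ba: True
    show ?thesis
    proof (cases "bdd_below S")
      case bb: True
      define r1 where "r1 = Inf S"
      define r2 where "r2 = Sup S"
      have "\<forall>x. (x - r1) * (x - r2) * D x \<le> 0"
      proof
        fix x
        show "(x - r1) * (x - r2) * D x \<le> 0"
        proof (cases "x \<in> S")
          case True
          have "r1 \<le> x" unfolding r1_def using True bb by (rule cInf_lower)
          moreover have "x \<le> r2" unfolding r2_def using True ba by (rule cSup_upper)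
          ultimately have "(x - r1) * (x - r2) \<le> 0" by (simp add: mult_nonneg_nonpos)
          moreover have "D x > 0" using True unfolding S_def D_def by simp
          ultimately show ?thesis by (simp add: mult_nonpos_nonneg)
        next
          case False
          have Dx: "D x \<le> 0" using False unfolding S_def D_def by simp
          have "\<not> (r1 < x \<and> x < r2)"
          proof
            assume "r1 < x \<and> x < r2"
            have ne: "S \<noteq> {}" using x0S by auto
            obtain y where y: "y \<in> S" "y < x"
              using cInf_less_iff[OF ne bb, of x] \<open>r1 < x \<and> x < r2\<close> unfolding r1_def by auto
            obtain z where z: "z \<in> S" "x < z"
              using less_cSup_iff[OF ne ba, of x] \<open>r1 < x \<and> x < r2\<close> unfolding r2_def by auto
            show False using conv[of y z x] y z False unfolding S_def by auto
          qed
          moreover have "r1 \<le> r2" unfolding r1_def r2_def using x0S ba bb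
            using cInf_lower[OF x0S bb] cSup_upper[OF x0S ba] by linarith
          ultimately have "0 \<le> (x - r1) * (x - r2)"
            by (cases "x \<le> r1") (auto simp: mult_nonpos_nonpos)
          then show ?thesis using Dx by (simp add: mult_nonneg_nonpos)
        qed
      qed
      moreover have "has_bochner_integral lborel (\<lambda>x. (x - r1) * (x - r2) * D x) I"
      proof -
        have "has_bochner_integral lborel (\<lambda>x. x^2 * D x + (- (r1 + r2)) * (x * D x) + (r1*r2) * D x)
                (I + (- (r1 + r2)) * 0 + (r1*r2) * 0)"
          using i0 i1 i2' unfolding D_def
          by (intro has_bochner_integral_add has_bochner_integral_mult_right) auto
        then show ?thesis by (simp add: algebra_simps power2_eq_square)
      qed
      ultimately show ?thesis
        using has_bochner_integral_integral_eq Bochner_Integration.integral_nonneg[of lborel "\<lambda>x. - ((x - r1) * (x - r2) * D x)"]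
        by (metis add.inverse_inverse integral_minus le_minus_iff neg_le_0_iff_le)
    next
      case bb: False
      define r2 where "r2 = Sup S"
      have nn: "0 \<le> ((-1)*x + r2) * D x" for x
      proof (cases "x \<in> S")
        case True
        have "x \<le> r2" unfolding r2_def using True ba by (rule cSup_upper)
        moreover have "D x > 0" using True unfolding S_def D_def by simp
        ultimately show ?thesis by simp
      next
        case False
        have Dx: "D x \<le> 0" using False unfolding S_def D_def by simp
        have "\<not> x < r2"
        proof
          assume "x < r2"
          have ne: "S \<noteq> {}" using x0S by auto
          obtain z where z: "z \<in> S" "x < z"
            using less_cSup_iff[OF ne ba, of x] \<open>x < r2\<close> unfolding r2_def by auto
          have "\<exists>y\<in>S. y < x" using bb unfolding bdd_below_def by (metis not_le)
          then obtain y where y: "y \<in> S" "y < x" by auto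
          show False using conv[of y z x] y z False unfolding S_def by auto
        qed
        then show ?thesis using Dx by (simp add: mult_nonpos_nonpos)
      qed
      from ae_fin[OF comb nn _ i2'] show ?thesis by simp
    qed
  next
    case ba: False
    show ?thesis
    proof (cases "bdd_below S")
      case bb: True
      define r1 where "r1 = Inf S"
      have nn: "0 \<le> (1*x + (-r1)) * D x" for x
      proof (cases "x \<in> S")
        case True
        have "r1 \<le> x" unfolding r1_def using True bb by (rule cInf_lower)
        moreover have "D x > 0" using True unfolding S_def D_def by simp
        ultimately show ?thesis by simp
      next
        case False
        have Dx: "D x \<le> 0" using False unfolding S_def D_def by simp
        have "\<not> r1 < x"
        proof
          assume "r1 < x"
          have ne: "S \<noteq> {}" using x0S by auto
          obtain y where y: "y \<in> S" "y < x"
            using cInf_less_iff[OF ne bb, of x] \<open>r1 < x\<close> unfolding r1_def by auto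
          have "\<exists>z\<in>S. x < z" using ba unfolding bdd_above_def by (metis not_le)
          then obtain z where z: "z \<in> S" "x < z" by auto
          show False using conv[of y z x] y z False unfolding S_def by auto
        qed
        then show ?thesis using Dx by (simp add: mult_nonpos_nonpos)
      qed
      from ae_fin[OF comb nn _ i2'] show ?thesis by simp
    next
      case bb: False
      have nn: "0 \<le> (0*x + 1) * D x" for x
      proof -
        have "\<exists>y\<in>S. y < x" using bb unfolding bdd_below_def by (metis not_le)
        then obtain y where y: "y \<in> S" "y < x" by auto
        have "\<exists>z\<in>S. x < z" using ba unfolding bdd_above_def by (metis not_le)
        then obtain z where z: "z \<in> S" "x < z" by auto
        have "g x < f x" using conv[of y z x] y z unfolding S_def by auto
        then show ?thesis unfolding D_def by simp
      qed
      from ae_fin[OF comb nn _ i2'] show ?thesis by simp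
    qed
  qed
qed

lemma cross1:
  fixes f g :: "real \<Rightarrow> real"
  assumes conv: "\<And>y z x. g y < f y \<Longrightarrow> g z < f z \<Longrightarrow> y \<le> x \<Longrightarrow> x \<le> z \<Longrightarrow> g x < f x"
   and x0: "g x0 < f x0" and left: "\<And>x. x < x0 \<Longrightarrow> g x = 0" and fnn: "\<And>x. 0 \<le> f x"
   and i0: "has_bochner_integral lborel (\<lambda>x. f x - g x) 0"
   and i1: "has_bochner_integral lborel (\<lambda>x. x * (f x - g x)) I"
  shows "I \<le> 0"
proof -
  define S where "S = {x. g x < f x}"
  define D where "D = (\<lambda>x. f x - g x)"
  have x0S: "x0 \<in> S" using x0 S_def by simp
  have i0': "has_bochner_integral lborel (\<lambda>x. (0*x+1) * D x) 0" using i0 D_def by simp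
  have i1': "has_bochner_integral lborel (\<lambda>x. x * D x) I" using i1 D_def by simp
  show ?thesis
  proof (cases "bdd_above S")
    case ba: True
    define r2 where "r2 = Sup S"
    have "\<forall>x. (x - r2) * D x \<le> 0"
    proof
      fix x
      show "(x - r2) * D x \<le> 0"
      proof (cases "x \<in> S")
        case True
        have "x \<le> r2" unfolding r2_def using True ba by (rule cSup_upper)
        moreover have "D x > 0" using True unfolding S_def D_def by simp
        ultimately show ?thesis by (simp add: mult_nonpos_nonneg)
      next
        case False
        have Dx: "D x \<le> 0" using False unfolding S_def D_def by simp
        show ?thesis
        proof (cases "r2 \<le> x")
          case True then show ?thesis using Dx by (simp add: mult_nonneg_nonpos)
        next
          case nx: False
          show ?thesis
          proof (cases "x < x0")
            case True
            then have "D x = 0" using Dx left[OF True] fnn[of x] unfolding D_def by simp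
            then show ?thesis by simp
          next
            case False
            have ne: "S \<noteq> {}" using x0S by auto
            obtain z where z: "z \<in> S" "x < z"
              using less_cSup_iff[OF ne ba, of x] nx unfolding r2_def by auto
            have "x \<in> S" using conv[of x0 z x] x0S z False unfolding S_def by auto
            then show ?thesis using \<open>x \<notin> S\<close> by simp
          qed
        qed
      qed
    qed
    moreover have "has_bochner_integral lborel (\<lambda>x. (x - r2) * D x) I"
    proof -
      have "has_bochner_integral lborel (\<lambda>x. x * D x + (- r2) * D x) (I + (- r2) * 0)"
        using i0 i1' unfolding D_def
        by (intro has_bochner_integral_add has_bochner_integral_mult_right) auto
      then show ?thesis by (simp add: algebra_simps)
    qed
    ultimately show ?thesis
      using has_bochner_integral_integral_eq Bochner_Integration.integral_nonneg[of lborel "\<lambda>x. - ((x - r2) * D x)"]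
      by (metis add.inverse_inverse integral_minus le_minus_iff neg_le_0_iff_le)
  next
    case ba: False
    have nn: "0 \<le> (0*x + 1) * D x" for x
    proof (cases "x < x0")
      case True then show ?thesis using left[OF True] fnn[of x] unfolding D_def by simp
    next
      case False
      have "\<exists>z\<in>S. x < z" using ba unfolding bdd_above_def by (metis not_le)
      then obtain z where z: "z \<in> S" "x < z" by auto
      have "g x < f x" using conv[of x0 z x] x0S z False unfolding S_def by auto
      then show ?thesis unfolding D_def by simp
    qed
    from ae_fin[OF i0' nn _ i1'] show ?thesis by simp
  qed
qed




lemma hbi_forms:
  fixes g :: "real \<Rightarrow> real" and F :: "real \<Rightarrow> real \<Rightarrow> real \<Rightarrow> real"
  assumes "\<And>cu cv cw. has_bochner_integral lborel (\<lambda>x. g x * (cu + cv*x + cw*x^2)) (F cu cv cw)"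
  shows "has_bochner_integral lborel g (F 1 0 0)"
    "has_bochner_integral lborel (\<lambda>x. x * g x) (F 0 1 0)"
    "has_bochner_integral lborel (\<lambda>x. x^2 * g x) (F 0 0 1)"
proof -
  show "has_bochner_integral lborel g (F 1 0 0)"
  proof -
    have "(\<lambda>x. g x * (1 + 0*x + 0*x^2)) = g" by (rule ext) simp
    then show ?thesis using assms[of 1 0 0] by simp
  qed
  show "has_bochner_integral lborel (\<lambda>x. x * g x) (F 0 1 0)"
    using assms[of 0 1 0] by (simp add: mult.commute)
  show "has_bochner_integral lborel (\<lambda>x. x^2 * g x) (F 0 0 1)"
    using assms[of 0 0 1] by (simp add: mult.commute)
qed

lemma g1_int:
  assumes c: "0 < (c::real)"
  shows "has_bochner_integral lborel (\<lambda>x. (if x0 \<le> x then c * exp (-c*(x-x0)) else 0) * (cu + cv*x + cw*x^2))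
           (cu + cv*(x0 + 1/c) + cw*(x0^2 + 2*x0/c + 2/c^2))"
proof -
  have "(if x0 \<le> x then c * exp (-c*(x-x0)) else 0) = erlang_density 0 c (x - x0)" for x
    by (simp add: erlang_density_def)
  then show ?thesis using erl_shift[OF c, of x0 cu cv cw] by simp
qed

lemma g2_int:
  assumes c: "0 < (c::real)" and p: "0 < p" and q: "0 < q"
  shows "has_bochner_integral lborel
    (\<lambda>x. (if x0 \<le> x then c * exp (-(c/p)*(x-x0)) else c * exp ((c/q)*(x-x0))) * (cu + cv*x + cw*x^2))
    (p*(cu + cv*(x0 + 1/(c/p)) + cw*(x0^2 + 2*x0/(c/p) + 2/(c/p)^2)) +
     q*(cu + cv*(x0 - 1/(c/q)) + cw*(x0^2 - 2*x0/(c/q) + 2/(c/q)^2)))"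
proof -
  define w where "w = (\<lambda>x::real. cu + cv*x + cw*x^2)"
  have l1: "0 < c/p" and l2: "0 < c/q" using c p q by auto
  have "has_bochner_integral lborel
     (\<lambda>x. p * (erlang_density 0 (c/p) (x - x0) * w x) + q * (erlang_density 0 (c/q) (x0 - x) * w x))
    (p*(cu + cv*(x0 + 1/(c/p)) + cw*(x0^2 + 2*x0/(c/p) + 2/(c/p)^2)) +
     q*(cu + cv*(x0 - 1/(c/q)) + cw*(x0^2 - 2*x0/(c/q) + 2/(c/q)^2)))"
    unfolding w_def
    by (intro has_bochner_integral_add has_bochner_integral_mult_right erl_shift erl_refl l1 l2)
  moreover have "AE x in lborel. p * (erlang_density 0 (c/p) (x - x0) * w x) + q * (erlang_density 0 (c/q) (x0 - x) * w x)
     = (if x0 \<le> x then c * exp (-(c/p)*(x-x0)) else c * exp ((c/q)*(x-x0))) * w x"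
    using AE_lborel_singleton[of x0]
  proof eventually_elim
    case (elim x)
    show ?case
    proof (cases "x0 < x")
      case True then show ?thesis using p by (simp add: erlang_density_def)
    next
      case False then have "x < x0" using elim by simp
      then show ?thesis using q by (simp add: erlang_density_def field_simps)
    qed
  qed
  moreover have "(\<lambda>x. p * (erlang_density 0 (c/p) (x - x0) * w x) + q * (erlang_density 0 (c/q) (x0 - x) * w x)) \<in> borel_measurable lborel"
    unfolding w_def by measurable
  moreover have "(\<lambda>x. (if x0 \<le> x then c * exp (-(c/p)*(x-x0)) else c * exp ((c/q)*(x-x0))) * w x) \<in> borel_measurable lborel"
    unfolding w_def by measurable
  ultimately have "has_bochner_integral lborel (\<lambda>x. (if x0 \<le> x then c * exp (-(c/p)*(x-x0)) else c * exp ((c/q)*(x-x0))) * w x)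
    (p*(cu + cv*(x0 + 1/(c/p)) + cw*(x0^2 + 2*x0/(c/p) + 2/(c/p)^2)) +
     q*(cu + cv*(x0 - 1/(c/q)) + cw*(x0^2 - 2*x0/(c/q) + 2/(c/q)^2)))"
    using has_bochner_integral_cong_AE by blast
  then show ?thesis unfolding w_def .
qed




lemma step1:
  fixes f :: "real \<Rightarrow> real"
  assumes lc: "logconcave_fun f"
   and i0: "has_bochner_integral lborel f 1"
   and i1: "has_bochner_integral lborel (\<lambda>x. x * f x) m"
   and c: "0 < c" and cx: "c < f x0"
  shows "m \<le> x0 + 1/c"
proof -
  define g where "g = (\<lambda>x. if x0 \<le> x then c * exp (-c*(x-x0)) else 0)"
  have gi: "has_bochner_integral lborel (\<lambda>x. g x * (cu + cv*x + cw*x^2))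
           (cu + cv*(x0 + 1/c) + cw*(x0^2 + 2*x0/c + 2/c^2))" for cu cv cw
    unfolding g_def by (rule g1_int[OF c])
  note gf = hbi_forms[OF gi]
  have f0: "\<And>x. 0 \<le> f x" using lc unfolding logconcave_fun_def by blast
  have g0: "\<And>x. 0 \<le> g x" unfolding g_def using c by simp
  have G: "g ((1-t)*x0 + t*z) \<le> g x0 powr (1-t) * g z powr t" if "0 < t" "t \<le> 1" for z t
    unfolding g_def by (rule G_one[OF c that])
  have gx0: "g x0 < f x0" unfolding g_def using cx by simp
  have conv: "\<And>y z x. g y < f y \<Longrightarrow> g z < f z \<Longrightarrow> y \<le> x \<Longrightarrow> x \<le> z \<Longrightarrow> g x < f x"
    using conv_set[OF lc g0 G gx0] by blast
  have left: "\<And>x. x < x0 \<Longrightarrow> g x = 0" unfolding g_def by simp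
  have d0: "has_bochner_integral lborel (\<lambda>x. f x - g x) 0"
    using has_bochner_integral_diff[OF i0 gf(1)] by simp
  have d1: "has_bochner_integral lborel (\<lambda>x. x * (f x - g x)) (m - (x0 + 1/c))"
    using has_bochner_integral_diff[OF i1 gf(2)] by (simp add: right_diff_distrib)
  have "m - (x0 + 1/c) \<le> 0" by (rule cross1[OF conv gx0 left f0 d0 d1])
  then show ?thesis by simp
qed

lemma step2:
  fixes f :: "real \<Rightarrow> real"
  assumes lc: "logconcave_fun f"
   and i0: "has_bochner_integral lborel f 1"
   and i1: "has_bochner_integral lborel (\<lambda>x. x * f x) 0"
   and i2: "has_bochner_integral lborel (\<lambda>x. x^2 * f x) V"
   and c: "0 < c" and cx: "c < f x0" and cx0: "\<bar>c * x0\<bar> < 1"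
  shows "V < 1 / c^2"
proof -
  define p where "p = (1 - c*x0)/2"
  define q where "q = (1 + c*x0)/2"
  have p: "0 < p" and q: "0 < q" using cx0 unfolding p_def q_def by auto
  define g where "g = (\<lambda>x. if x0 \<le> x then c * exp (-(c/p)*(x-x0)) else c * exp ((c/q)*(x-x0)))"
  have gi: "has_bochner_integral lborel (\<lambda>x. g x * (cu + cv*x + cw*x^2))
    (p*(cu + cv*(x0 + 1/(c/p)) + cw*(x0^2 + 2*x0/(c/p) + 2/(c/p)^2)) +
     q*(cu + cv*(x0 - 1/(c/q)) + cw*(x0^2 - 2*x0/(c/q) + 2/(c/q)^2)))" for cu cv cw
    unfolding g_def by (rule g2_int[OF c p q])
  note gf = hbi_forms[OF gi]
  have g0: "\<And>x. 0 \<le> g x" unfolding g_def using c by simp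
  have G: "g ((1-t)*x0 + t*z) \<le> g x0 powr (1-t) * g z powr t" if "0 < t" "t \<le> 1" for z t
    unfolding g_def by (rule G_two[OF c that])
  have gx0: "g x0 < f x0" unfolding g_def using cx by simp
  have conv: "\<And>y z x. g y < f y \<Longrightarrow> g z < f z \<Longrightarrow> y \<le> x \<Longrightarrow> x \<le> z \<Longrightarrow> g x < f x"
    using conv_set[OF lc g0 G gx0] by blast
  have pq: "p + q = 1" "p - q = - c*x0" unfolding p_def q_def by (auto simp: field_simps)
  have v0: "p*(1 + 0*(x0 + 1/(c/p)) + 0*(x0^2 + 2*x0/(c/p) + 2/(c/p)^2)) +
     q*(1 + 0*(x0 - 1/(c/q)) + 0*(x0^2 - 2*x0/(c/q) + 2/(c/q)^2)) = 1"
    using pq by simp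
  have v1: "p*(0 + 1*(x0 + 1/(c/p)) + 0*(x0^2 + 2*x0/(c/p) + 2/(c/p)^2)) +
     q*(0 + 1*(x0 - 1/(c/q)) + 0*(x0^2 - 2*x0/(c/q) + 2/(c/q)^2)) = 0"
  proof -
    have "p*(x0 + p/c) + q*(x0 - q/c) = (p+q)*x0 + (p+q)*(p-q)/c"
      using c by (simp add: field_simps)
    also have "\<dots> = 0" using pq c by simp
    finally show ?thesis using p q c by simp
  qed
  have v2: "p*(0 + 0*(x0 + 1/(c/p)) + 1*(x0^2 + 2*x0/(c/p) + 2/(c/p)^2)) +
     q*(0 + 0*(x0 - 1/(c/q)) + 1*(x0^2 - 2*x0/(c/q) + 2/(c/q)^2)) = (1 - 2*p*q)/c^2"
  proof -
    have q': "q = 1 - p" using pq by simp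
    have x0': "x0 = (1 - 2*p)/c" using p_def c by (simp add: field_simps)
    show ?thesis unfolding q' x0' using c p by (simp add: field_simps power2_eq_square)
  qed
  have d0: "has_bochner_integral lborel (\<lambda>x. f x - g x) 0"
    using has_bochner_integral_diff[OF i0 gf(1), unfolded v0] by simp
  have d1: "has_bochner_integral lborel (\<lambda>x. x * (f x - g x)) 0"
    using has_bochner_integral_diff[OF i1 gf(2), unfolded v1] by (simp add: right_diff_distrib)
  have d2: "has_bochner_integral lborel (\<lambda>x. x^2 * (f x - g x)) (V - (1 - 2*p*q)/c^2)"
    using has_bochner_integral_diff[OF i2 gf(3), unfolded v2] by (simp add: right_diff_distrib)
  have "V - (1 - 2*p*q)/c^2 \<le> 0" by (rule cross2[OF conv gx0 d0 d1 d2])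
  moreover have "(1 - 2*p*q)/c^2 < 1/c^2" using p q c by (simp add: divide_strict_right_mono)
  ultimately show ?thesis by simp
qed

lemma hbi_refl:
  fixes h :: "real \<Rightarrow> real"
  assumes "has_bochner_integral lborel h v"
  shows "has_bochner_integral lborel (\<lambda>x. h (- x)) v"
proof -
  have int: "integrable lborel (\<lambda>x. h (0 + (-1) * x))"
    using assms lborel_integrable_real_affine_iff[of "-1" h 0] by (simp add: has_bochner_integral_iff)
  have "integral\<^sup>L lborel h = integral\<^sup>L lborel (\<lambda>x. h (0 + (-1) * x))"
    using lborel_integral_real_affine[of "-1" h 0] by simp
  then show ?thesis using int assms by (simp add: has_bochner_integral_iff)
qed

lemma lc_refl: "logconcave_fun f \<Longrightarrow> logconcave_fun (\<lambda>x. f (- x))"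
  unfolding logconcave_fun_def
proof safe
  fix x y t :: real
  assume a: "\<forall>x y t. 0 \<le> t \<and> t \<le> 1 \<longrightarrow> f x powr (1 - t) * f y powr t \<le> f ((1 - t) * x + t * y)"
    "0 \<le> t" "t \<le> 1"
  have "f (-x) powr (1 - t) * f (-y) powr t \<le> f ((1 - t) * (-x) + t * (-y))" using a by blast
  then show "f (-x) powr (1 - t) * f (-y) powr t \<le> f (- ((1 - t) * x + t * y))"
    by (simp add: algebra_simps)
qed auto

lemma dens_le1:
  fixes f :: "real \<Rightarrow> real"
  assumes lc: "logconcave_fun f"
   and i0: "has_bochner_integral lborel f 1"
   and i1: "has_bochner_integral lborel (\<lambda>x. x * f x) 0"
   and i2: "has_bochner_integral lborel (\<lambda>x. x^2 * f x) 1"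
  shows "f x0 \<le> 1"
proof (rule ccontr)
  assume "\<not> f x0 \<le> 1"
  then have M: "1 < f x0" by simp
  define c where "c = (2 + f x0)/3"
  define c2 where "c2 = (1 + 2 * f x0)/3"
  have c: "1 < c" "c < c2" "c2 < f x0" using M unfolding c_def c2_def by auto
  have a1: "0 \<le> x0 + 1/c2" using step1[OF lc i0 i1, of c2 x0] c by simp
  have i1': "has_bochner_integral lborel (\<lambda>x. x * f (- x)) 0"
    using hbi_refl[OF i1] has_bochner_integral_minus by fastforce
  have a2: "0 \<le> - x0 + 1/c2"
    using step1[OF lc_refl[OF lc] hbi_refl[OF i0] i1', of c2 "- x0"] c by simp
  have "\<bar>x0\<bar> \<le> 1/c2" using a1 a2 by linarith
  also have "1/c2 < 1/c" using c by (simp add: frac_less2)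
  finally have "\<bar>c * x0\<bar> < 1" using c by (simp add: abs_mult field_simps)
  then have "1 < 1/c^2" using step2[OF lc i0 i1 i2, of c x0] c by simp
  moreover have "1/c^2 < 1" using c by (simp add: power_less_one_iff)
  ultimately show False by simp
qed




lemma meas_bounds:
  fixes f :: "real \<Rightarrow> real"
  assumes fm: "f \<in> borel_measurable borel" and f0: "\<And>x. 0 \<le> f x"
    and S: "S \<in> sets borel" and Sf: "emeasure lborel S < \<infinity>"
    and lo: "0 \<le> lo" and b: "\<And>x. x \<in> S \<Longrightarrow> lo \<le> f x \<and> f x \<le> hi"
  shows "emeasure (density lborel f) S \<noteq> \<infinity>"
    and "lo * measure lborel S \<le> measure (density lborel f) S"
    and "measure (density lborel f) S \<le> hi * measure lborel S"
proof -
  have hi: "0 \<le> hi" if "x \<in> S" for x using b[OF that] f0[of x] by linarith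
  have Sl: "S \<in> sets lborel" using S by simp
  have e: "emeasure (density lborel f) S = (\<integral>\<^sup>+x\<in>S. ennreal (f x) \<partial>lborel)"
    using emeasure_density[of "\<lambda>x. ennreal (f x)" lborel S] fm Sl by simp
  have m: "emeasure lborel S = ennreal (measure lborel S)"
    using Sf by (simp add: emeasure_eq_ennreal_measure)
  have lw: "(\<integral>\<^sup>+x\<in>S. ennreal lo \<partial>lborel) \<le> (\<integral>\<^sup>+x\<in>S. ennreal (f x) \<partial>lborel)"
  proof (rule nn_integral_mono)
    fix x show "ennreal lo * indicator S x \<le> ennreal (f x) * indicator S x"
    proof (cases "x \<in> S")
      case True then have "lo \<le> f x" using b by blast
      then show ?thesis using True by (simp add: ennreal_leI)
    qed simp
  qed
  have up': "emeasure (density lborel f) S \<le> ennreal (max hi 0 * measure lborel S)"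
  proof -
    have "(\<integral>\<^sup>+x\<in>S. ennreal (f x) \<partial>lborel) \<le> (\<integral>\<^sup>+x\<in>S. ennreal (max hi 0) \<partial>lborel)"
    proof (rule nn_integral_mono)
      fix x show "ennreal (f x) * indicator S x \<le> ennreal (max hi 0) * indicator S x"
      proof (cases "x \<in> S")
        case True then have "f x \<le> hi" using b by blast
        then show ?thesis using True by (simp add: ennreal_leI)
      qed simp
    qed
    also have "\<dots> = ennreal (max hi 0) * ennreal (measure lborel S)"
      using nn_integral_cmult_indicator[OF Sl, of "ennreal (max hi 0)"] m by simp
    finally show ?thesis using e by (simp add: ennreal_mult)
  qed
  then show fin: "emeasure (density lborel f) S \<noteq> \<infinity>"
    using order.strict_trans1[OF up' ennreal_less_top[of "max hi 0 * measure lborel S"]] by simp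
  have em: "emeasure (density lborel f) S = ennreal (measure (density lborel f) S)"
    using fin by (simp add: emeasure_eq_ennreal_measure)
  show "lo * measure lborel S \<le> measure (density lborel f) S"
  proof -
    have "ennreal (lo * measure lborel S) = (\<integral>\<^sup>+x\<in>S. ennreal lo \<partial>lborel)"
      using nn_integral_cmult_indicator[OF Sl, of "ennreal lo"] m lo by (simp add: ennreal_mult)
    also have "\<dots> \<le> ennreal (measure (density lborel f) S)" using lw e em by simp
    finally show ?thesis using ennreal_le_iff[OF measure_nonneg] by blast
  qed
  show "measure (density lborel f) S \<le> hi * measure lborel S"
  proof (cases "S = {}")
    case True then show ?thesis by simp
  next
    case False
    then obtain x where "x \<in> S" by auto
    then have "0 \<le> hi" by (rule hi)
    then have "ennreal (measure (density lborel f) S) \<le> ennreal (hi * measure lborel S)"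
      using up' em by (simp add: max_def)
    then show ?thesis using ennreal_le_iff \<open>0 \<le> hi\<close> by (simp add: measure_nonneg)
  qed
qed

lemma diff_set:
  fixes a b e :: real
  assumes "a < b" "0 < e"
  shows "measure lborel ({a-e..b+e} - {a..b}) = 2*e"
    and "{a-e..b+e} - {a..b} \<in> sets borel"
    and "emeasure lborel ({a-e..b+e} - {a..b}) < \<infinity>"
proof -
  have "measure lborel ({a-e..b+e} - {a..b}) = measure lborel {a-e..b+e} - measure lborel {a..b}"
    using assms by (intro measure_Diff) auto
  then show "measure lborel ({a-e..b+e} - {a..b}) = 2*e" using assms by simp
  show "{a-e..b+e} - {a..b} \<in> sets borel" by simp
  have "emeasure lborel ({a-e..b+e} - {a..b}) \<le> emeasure lborel {a-e..b+e}"
    by (rule emeasure_mono) auto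
  then show "emeasure lborel ({a-e..b+e} - {a..b}) < \<infinity>"
    using assms by (simp add: order.strict_trans1)
qed

lemma quot_eq:
  fixes f :: "real \<Rightarrow> real"
  assumes fm: "f \<in> borel_measurable borel" and fin: "emeasure (density lborel f) {a-e..b+e} \<noteq> \<infinity>"
    and ab: "a < b" "0 < e"
  shows "measure (density lborel f) {a-e..b+e} - measure (density lborel f) {a..b}
    = measure (density lborel f) ({a-e..b+e} - {a..b})"
  using assms by (intro measure_Diff[symmetric]) auto

lemma bm_le2:
  fixes f :: "real \<Rightarrow> real"
  assumes fm: "f \<in> borel_measurable borel" and f0: "\<And>x. 0 \<le> f x" and f1: "\<And>x. f x \<le> 1"
    and ab: "a < b"
  shows "boundary_measure (density lborel f) a b \<le> 2"
proof -
  let ?Q = "\<lambda>e. ereal ((measure (density lborel f) {a - e..b + e} - measure (density lborel f) {a..b}) / e)"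
  have "eventually (\<lambda>e. ?Q e \<le> 2) (at_right 0)"
    using eventually_at_right_less[of 0]
  proof eventually_elim
    case (elim e)
    note d = diff_set[OF ab elim]
    have "emeasure lborel {a-e..b+e} < \<infinity>"
      using emeasure_lborel_Icc[of "a-e" "b+e"] ab elim by simp
    then have fin: "emeasure (density lborel f) {a-e..b+e} \<noteq> \<infinity>"
      using meas_bounds(1)[OF fm f0 _ _ order.refl, of "{a-e..b+e}" 1] f0 f1 by auto
    have "measure (density lborel f) ({a-e..b+e} - {a..b}) \<le> 1 * (2*e)"
      using meas_bounds(3)[OF fm f0 d(2) d(3) order.refl, of 1] f0 f1 d(1) by auto
    then show ?case using quot_eq[OF fm fin ab elim] elim by (simp add: divide_le_eq)
  qed
  then have "Limsup (at_right 0) ?Q \<le> 2" by (rule Limsup_bounded)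
  moreover have "Liminf (at_right 0) ?Q \<le> Limsup (at_right 0) ?Q"
    by (rule Liminf_le_Limsup) simp
  ultimately show ?thesis unfolding boundary_measure_def by simp
qed




lemma dens_transfer:
  fixes f h :: "real \<Rightarrow> real"
  assumes fm: "f \<in> borel_measurable borel" and f0: "\<And>x. 0 \<le> f x"
    and hm: "h \<in> borel_measurable borel"
    and hi: "integrable (density lborel f) h"
  shows "has_bochner_integral lborel (\<lambda>x. h x * f x) (integral\<^sup>L (density lborel f) h)"
proof -
  have i: "integrable lborel (\<lambda>x. f x *\<^sub>R h x)"
    using hi integrable_density[of h lborel f] fm hm f0 by simp
  have e: "integral\<^sup>L (density lborel f) h = integral\<^sup>L lborel (\<lambda>x. f x *\<^sub>R h x)"
    using integral_density[of h lborel f] fm hm f0 by simp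
  show ?thesis using i unfolding e by (simp add: has_bochner_integral_iff mult.commute)
qed

lemma part1:
  assumes lcm: "logconcave_measure \<mu>" and iso: "isotropic \<mu>"
  shows "Gamma_iso \<mu> \<le> 2"
proof -
  obtain f where fm: "f \<in> borel_measurable borel" and lc: "logconcave_fun f"
    and mu: "\<mu> = density lborel (\<lambda>x. ennreal (f x))"
    using lcm unfolding logconcave_measure_def by blast
  have ps: "prob_space \<mu>" using lcm unfolding logconcave_measure_def by blast
  then have fms: "finite_measure \<mu>" by (rule prob_space.finite_measure)
  have f0: "\<And>x. 0 \<le> f x" using lc unfolding logconcave_fun_def by blast
  have sp: "space \<mu> = UNIV" using mu by simp
  have i2: "integrable \<mu> (\<lambda>x. x^2)" and e1: "(\<integral>x. x \<partial>\<mu>) = 0" and e2: "(\<integral>x. x^2 \<partial>\<mu>) = 1"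
    using iso unfolding isotropic_def by auto
  have i1: "integrable \<mu> (\<lambda>x. x)"
    using finite_measure.square_integrable_imp_integrable[OF fms _ i2] mu by simp
  have i0: "integrable \<mu> (\<lambda>x. 1::real)" using fms by (simp add: finite_measure.integrable_const)
  have e0: "(\<integral>x. 1 \<partial>\<mu>) = (1::real)" using prob_space.prob_space[OF ps] sp by simp
  have h0: "has_bochner_integral lborel f 1"
    using dens_transfer[OF fm f0 _ i0[unfolded mu]] e0 mu by simp
  have h1: "has_bochner_integral lborel (\<lambda>x. x * f x) 0"
    using dens_transfer[OF fm f0 _ i1[unfolded mu]] e1 mu by simp
  have h2: "has_bochner_integral lborel (\<lambda>x. x^2 * f x) 1"
    using dens_transfer[OF fm f0 _ i2[unfolded mu]] e2 mu by simp
  have f1: "\<And>x. f x \<le> 1" using dens_le1[OF lc h0 h1 h2] by blast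
  show ?thesis unfolding Gamma_iso_def
  proof (rule SUP_least)
    fix ab :: "real \<times> real" assume "ab \<in> {(a, b). a < b}"
    then have "fst ab < snd ab" by auto
    then show "boundary_measure \<mu> (fst ab) (snd ab) \<le> 2"
      unfolding mu by (rule bm_le2[OF fm f0 f1])
  qed
qed




definition f0e :: "real \<Rightarrow> real" where
  "f0e x = (if -1 \<le> x then exp (-(x + 1)) else 0)"

lemma f0e_int: "has_bochner_integral lborel (\<lambda>x. f0e x * (cu + cv*x + cw*x^2)) (cu + cw)"
proof -
  have "f0e x = erlang_density 0 1 (x - (-1))" for x
    by (auto simp: f0e_def erlang_density_def)
  then show ?thesis using erl_shift[of 1 "-1" cu cv cw] by simp
qed

lemma f0e_nn: "0 \<le> f0e x" by (simp add: f0e_def)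
lemma f0e_le1: "f0e x \<le> 1" by (simp add: f0e_def)
lemma f0e_meas: "f0e \<in> borel_measurable borel" unfolding f0e_def by measurable

lemma f0e_lc: "logconcave_fun f0e"
  unfolding logconcave_fun_def
proof (intro conjI allI impI)
  fix x show "0 \<le> f0e x" by (rule f0e_nn)
next
  fix x y t :: real assume t: "0 \<le> t \<and> t \<le> 1"
  show "f0e x powr (1 - t) * f0e y powr t \<le> f0e ((1 - t) * x + t * y)"
  proof (cases "-1 \<le> x \<and> -1 \<le> y")
    case True
    have "-1 \<le> (1 - t) * x + t * y"
    proof -
      have "(1-t)*(-1) \<le> (1 - t) * x" using True t by (intro mult_left_mono) auto
      moreover have "t*(-1) \<le> t * y" using True t by (intro mult_left_mono) auto
      ultimately show ?thesis by (simp add: algebra_simps)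
    qed
    then have "f0e ((1 - t) * x + t * y) = exp (-((1 - t) * x + t * y + 1))" by (simp add: f0e_def)
    also have "\<dots> = exp (-(x+1)) powr (1-t) * exp (-(y+1)) powr t"
      by (simp add: exp_powr_real exp_add[symmetric] algebra_simps)
    finally show ?thesis using True by (simp add: f0e_def)
  next
    case False
    then have "f0e x = 0 \<or> f0e y = 0" by (auto simp: f0e_def)
    then show ?thesis using f0e_nn by auto
  qed
qed

lemma mu0_ps: "prob_space (density lborel f0e)"
proof (rule prob_spaceI)
  have hb: "has_bochner_integral lborel f0e 1" using f0e_int[of 1 0 0] by simp
  have "emeasure (density lborel f0e) (space (density lborel f0e)) = (\<integral>\<^sup>+x. ennreal (f0e x) \<partial>lborel)"
    using emeasure_density[of "\<lambda>x. ennreal (f0e x)" lborel UNIV] f0e_meas by simp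
  also have "\<dots> = ennreal 1"
    using nn_integral_eq_integral[of lborel f0e] hb f0e_nn by (simp add: has_bochner_integral_iff)
  finally show "emeasure (density lborel f0e) (space (density lborel f0e)) = 1" by simp
qed

lemma mu0_iso: "isotropic (density lborel f0e)"
proof -
  have h1: "has_bochner_integral lborel (\<lambda>x. f0e x *\<^sub>R x) 0" using f0e_int[of 0 1 0] by simp
  have h2: "has_bochner_integral lborel (\<lambda>x. f0e x *\<^sub>R x^2) 1" using f0e_int[of 0 0 1] by simp
  have "integrable (density lborel f0e) (\<lambda>x. x^2)"
    using integrable_density[of "\<lambda>x. x^2" lborel f0e] f0e_meas f0e_nn h2
    by (simp add: has_bochner_integral_iff)
  moreover have "(\<integral>x. x \<partial>density lborel f0e) = 0"
    using integral_density[of "\<lambda>x. x" lborel f0e] f0e_meas f0e_nn h1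
    by (simp add: has_bochner_integral_iff)
  moreover have "(\<integral>x. x^2 \<partial>density lborel f0e) = 1"
    using integral_density[of "\<lambda>x. x^2" lborel f0e] f0e_meas f0e_nn h2
    by (simp add: has_bochner_integral_iff)
  ultimately show ?thesis unfolding isotropic_def by simp
qed

lemma mu0_lcm: "logconcave_measure (density lborel f0e)"
  unfolding logconcave_measure_def using mu0_ps f0e_meas f0e_lc by blast

lemma bm_lower:
  assumes d: "0 < d" "d < 1"
  shows "ereal (2 * exp (-3*d)) \<le> boundary_measure (density lborel f0e) (-1+d) (-1+2*d)"
proof -
  define a where "a = -1 + d"
  define b where "b = -1 + 2*d"
  have ab: "a < b" using d unfolding a_def b_def by simp
  let ?Q = "\<lambda>e. ereal ((measure (density lborel f0e) {a - e..b + e} - measure (density lborel f0e) {a..b}) / e)"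
  have ev: "eventually (\<lambda>e. e < d) (at_right (0::real))"
    unfolding eventually_at_right_field using d by auto
  have "eventually (\<lambda>e. ereal (2 * exp (-3*d)) \<le> ?Q e) (at_right 0)"
    using eventually_at_right_less[of 0] ev
  proof eventually_elim
    case (elim e)
    then have e: "0 < e" "e < d" by auto
    note dd = diff_set[OF ab e(1)]
    have "emeasure lborel {a-e..b+e} < \<infinity>"
      using emeasure_lborel_Icc[of "a-e" "b+e"] ab e by simp
    then have fin: "emeasure (density lborel f0e) {a-e..b+e} \<noteq> \<infinity>"
      using meas_bounds(1)[OF f0e_meas f0e_nn _ _ order.refl, of "{a-e..b+e}" 1] f0e_nn f0e_le1 by auto
    have bnd: "exp (-3*d) \<le> f0e x \<and> f0e x \<le> 1" if "x \<in> {a-e..b+e} - {a..b}" for x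
    proof -
      have "-1 \<le> x" "x + 1 \<le> 3*d" using that e unfolding a_def b_def by auto
      then show ?thesis by (simp add: f0e_def)
    qed
    have "exp (-3*d) * (2*e) \<le> measure (density lborel f0e) ({a-e..b+e} - {a..b})"
      using meas_bounds(2)[OF f0e_meas f0e_nn dd(2) dd(3) _ bnd] dd(1) by simp
    then have "2 * exp (-3*d) \<le> (measure (density lborel f0e) {a - e..b + e} - measure (density lborel f0e) {a..b}) / e"
      using quot_eq[OF f0e_meas fin ab e(1)] e by (simp add: le_divide_eq algebra_simps)
    then show ?case by simp
  qed
  then have "ereal (2 * exp (-3*d)) \<le> Liminf (at_right 0) ?Q" by (rule Liminf_bounded)
  then show ?thesis unfolding boundary_measure_def a_def b_def .
qed

lemma gamma_lower:
  assumes d: "0 < d" "d < 1"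
  shows "ereal (2 * exp (-3*d)) \<le> Gamma_iso (density lborel f0e)"
proof -
  have "boundary_measure (density lborel f0e) (-1+d) (-1+2*d) \<le> Gamma_iso (density lborel f0e)"
    unfolding Gamma_iso_def
    by (rule SUP_upper2[of "(-1+d, -1+2*d)"]) (use d in auto)
  then show ?thesis using bm_lower[OF d] by simp
qed

lemma gamma0: "Gamma_iso (density lborel f0e) = 2"
proof -
  have up: "Gamma_iso (density lborel f0e) \<le> 2" by (rule part1[OF mu0_lcm mu0_iso])
  have l0: "ereal (2 * exp (-3*(1/2))) \<le> Gamma_iso (density lborel f0e)" by (rule gamma_lower) auto
  show ?thesis
  proof (cases "Gamma_iso (density lborel f0e)")
    case (real r)
    have r0: "0 \<le> r" using l0 real by simp (smt (verit) exp_gt_zero)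
    have "2 \<le> r"
    proof (rule ccontr)
      assume "\<not> 2 \<le> r"
      then have r2: "r < 2" by simp
      define d where "d = (2 - r)/12"
      have d: "0 < d" "d < 1" using r0 r2 unfolding d_def by auto
      have "1 + (-3*d) \<le> exp (-3*d)" by (rule exp_ge_add_one_self)
      then have "2 * (1 - 3*d) \<le> 2 * exp (-3*d)" by simp
      moreover have "r < 2 * (1 - 3*d)" using r2 unfolding d_def by (simp add: field_simps)
      moreover have "2 * exp (-3*d) \<le> r" using gamma_lower[OF d] real by simp
      ultimately show False by simp
    qed
    then show ?thesis using up real by simp
  qed (use up l0 in auto)
qed


theorem theorem5p9:
  shows "(\<forall>\<mu>. logconcave_measure \<mu> \<and> isotropic \<mu> \<longrightarrow> Gamma_iso \<mu> \<le> 2) \<and>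
    (let \<mu>\<^sub>0 = density lborel (\<lambda>x. ennreal (if -1 \<le> x then exp (-(x + 1)) else 0))
     in logconcave_measure \<mu>\<^sub>0 \<and> isotropic \<mu>\<^sub>0 \<and> Gamma_iso \<mu>\<^sub>0 = 2)"
proof
  show "\<forall>\<mu>. logconcave_measure \<mu> \<and> isotropic \<mu> \<longrightarrow> Gamma_iso \<mu> \<le> 2"
    using part1 by blast
  have e: "(\<lambda>x. ennreal (if -1 \<le> x then exp (-(x + 1)) else 0)) = (\<lambda>x. ennreal (f0e x))"
    by (simp add: f0e_def)
  show "let \<mu>\<^sub>0 = density lborel (\<lambda>x. ennreal (if -1 \<le> x then exp (-(x + 1)) else 0))
     in logconcave_measure \<mu>\<^sub>0 \<and> isotropic \<mu>\<^sub>0 \<and> Gamma_iso \<mu>\<^sub>0 = 2"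
    unfolding Let_def e using mu0_lcm mu0_iso gamma0 by blast
qed

end
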